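(* Let $A$ be an antilinear operator on a complex $n$-dimensional space $W$, $\lambda>0$ real, $W_\lambda^{(k)}=\ker(A^2-\lambda^2 I)^k$ and $\widetilde W_\lambda^{(k)}=\{x\in W:(A-\lambda I)^kx=0\}$. If $v\in W_\lambda^{(k)}$, then there exist unique vectors $v_+,v_-\in\widetilde W_\lambda^{(k)}$ such that $v=v_++iv_-$.
   Context: An antilinear operator satisfies $A(zv+w)=\bar z Av+Aw$. *)

theory Defs
  imports "HOL-Analysis.Analysis"
begin

text \<open>W = complex^'n, an n-dimensional complex space with n = CARD('n).
Scalar multiplication is the componentwise one (*s).\<close>

definition antilinear :: "(complex ^ 'n \<Rightarrow> complex ^ 'n) \<Rightarrow> bool" where
  "antilinear A \<longleftrightarrow> (\<forall>z v w. A (z *s v + w) = cnj z *s A v + A w)"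

definition W_lam :: "(complex ^ 'n \<Rightarrow> complex ^ 'n) \<Rightarrow> real \<Rightarrow> nat \<Rightarrow> (complex ^ 'n) set" where
  "W_lam A l k = {x. ((\<lambda>y. A (A y) - complex_of_real (l\<^sup>2) *s y) ^^ k) x = 0}"

definition Wt_lam :: "(complex ^ 'n \<Rightarrow> complex ^ 'n) \<Rightarrow> real \<Rightarrow> nat \<Rightarrow> (complex ^ 'n) set" where
  "Wt_lam A l k = {x. ((\<lambda>y. A y - complex_of_real l *s y) ^^ k) x = 0}"

end

theory Submission
  imports Defs
begin

lemma lin_funpow: fixes f :: "'a::real_vector \<Rightarrow> 'a" shows "linear f \<Longrightarrow> linear (f ^^ n)"
proof (induction n)
  case 0
  have "f ^^ 0 = id" by (rule ext) simp
  then show ?case using real_vector.linear_id by metis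
next
  case (Suc n)
  have "f ^^ Suc n = f \<circ> f ^^ n" by simp
  then show ?case using linear_compose[of "f ^^ n" f] Suc by metis
qed

lemma comm_funpow:
  assumes c: "\<And>x. f (g x) = g (f x)"
  shows "f ((g ^^ n) x) = (g ^^ n) (f x)"
proof (induction n)
  case (Suc n)
  have "f ((g ^^ Suc n) x) = f (g ((g ^^ n) x))" by simp
  also have "\<dots> = g (f ((g ^^ n) x))" by (rule c)
  also have "\<dots> = (g ^^ Suc n) (f x)" using Suc.IH by simp
  finally show ?case .
qed simp

lemma comm_funpow2:
  assumes c: "\<And>x. f (g x) = g (f x)"
  shows "((\<lambda>x. f (g x)) ^^ n) x = (f ^^ n) ((g ^^ n) x)"
proof (induction n)
  case (Suc n)
  have cc: "\<And>y. (f ^^ n) (g y) = g ((f ^^ n) y)"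
    using comm_funpow[of g f n] c by metis
  have "((\<lambda>x. f (g x)) ^^ Suc n) x = f (g ((f ^^ n) ((g ^^ n) x)))" using Suc.IH by simp
  also have "\<dots> = f ((f ^^ n) (g ((g ^^ n) x)))" by (simp only: cc)
  also have "\<dots> = (f ^^ Suc n) ((g ^^ Suc n) x)" by simp
  finally show ?case .
qed simp

lemma inter0:
  fixes f g :: "'a::real_vector \<Rightarrow> 'a"
  assumes lf: "linear f" and lg: "linear g" and c: "\<And>x. f (g x) = g (f x)"
    and gf: "\<And>x. g x = f x + (2*l) *\<^sub>R x" and l: "l > 0"
  shows "(f ^^ m) x = 0 \<Longrightarrow> (g ^^ n) x = 0 \<Longrightarrow> x = 0"
proof (induction m arbitrary: x)
  case 0 then show ?case by simp
next
  case (Suc m)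
  have "(f ^^ m) (f x) = 0" using Suc.prems(1) by (metis comp_apply funpow_Suc_right)
  moreover have "(g ^^ n) (f x) = 0"
    using comm_funpow[of f g n x, OF c] Suc.prems(2) linear_0[OF lf] by simp
  ultimately have fx: "f x = 0" using Suc.IH by blast
  have "(g ^^ k) x = (2*l)^k *\<^sub>R x" for k
  proof (induction k)
    case (Suc k)
    have "(g ^^ Suc k) x = g ((2*l)^k *\<^sub>R x)" using Suc by simp
    also have "\<dots> = (2*l)^k *\<^sub>R g x" using linear_scale[OF lg] by simp
    also have "\<dots> = (2*l)^Suc k *\<^sub>R x" using gf[of x] fx by simp
    finally show ?case .
  qed simp
  then have "(2*l)^n *\<^sub>R x = 0" using Suc.prems(2) by simp
  then show ?case using l by simp
qed

lemma decomp:
  fixes f g :: "'a::real_vector \<Rightarrow> 'a"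
  assumes lf: "linear f" and lg: "linear g" and c: "\<And>x. f (g x) = g (f x)"
    and gf: "\<And>x. g x = f x + (2*l) *\<^sub>R x" and l: "l > 0"
  shows "(f ^^ m) ((g ^^ n) v) = 0 \<Longrightarrow> \<exists>a b. v = a + b \<and> (f ^^ m) a = 0 \<and> (g ^^ n) b = 0"
proof (induction m arbitrary: n v)
  case 0 then show ?case by (intro exI[of _ 0] exI[of _ v]) simp
next
  case (Suc m)
  note IHm = Suc.IH
  show ?case using Suc.prems
  proof (induction n arbitrary: v)
    case 0 then show ?case by (intro exI[of _ v] exI[of _ 0]) simp
  next
    case (Suc n)
    have "(f ^^ Suc m) ((g ^^ n) (g v)) = 0" using Suc.prems by (metis comp_apply funpow_Suc_right)
    then obtain a1 b1 where h1: "g v = a1 + b1" "(f ^^ Suc m) a1 = 0" "(g ^^ n) b1 = 0"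
      using Suc.IH by blast
    have "(f ^^ m) ((g ^^ Suc n) (f v)) = (f ^^ m) (f ((g ^^ Suc n) v))"
      using comm_funpow[of f g "Suc n" v, OF c] by simp
    also have "\<dots> = (f ^^ Suc m) ((g ^^ Suc n) v)" by (metis comp_apply funpow_Suc_right)
    finally have "(f ^^ m) ((g ^^ Suc n) (f v)) = 0" using Suc.prems by simp
    then obtain a2 b2 where h2: "f v = a2 + b2" "(f ^^ m) a2 = 0" "(g ^^ Suc n) b2 = 0"
      using IHm by blast
    define r where "r = 1 / (2*l)"
    have v: "v = r *\<^sub>R (g v - f v)" using gf[of v] l by (simp add: r_def)
    have la: "(f ^^ Suc m) (r *\<^sub>R (a1 - a2)) = 0"
    proof -
      have z: "(f ^^ Suc m) a2 = 0" using h2(2) linear_0[OF lf] by simp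
      have L: "linear (f ^^ Suc m)" by (rule lin_funpow[OF lf])
      show ?thesis by (simp only: linear_scale[OF L] linear_diff[OF L] h1(2) z) simp
    qed
    have lb: "(g ^^ Suc n) (r *\<^sub>R (b1 - b2)) = 0"
    proof -
      have z: "(g ^^ Suc n) b1 = 0" using h1(3) linear_0[OF lg] by simp
      have L: "linear (g ^^ Suc n)" by (rule lin_funpow[OF lg])
      show ?thesis by (simp only: linear_scale[OF L] linear_diff[OF L] h2(3) z) simp
    qed
    have "v = r *\<^sub>R (a1 - a2) + r *\<^sub>R (b1 - b2)"
      using v h1(1) h2(1) by (simp add: algebra_simps)
    then show ?case using la lb by blast
  qed
qed

lemma ipow:
  fixes f g :: "complex ^ 'n \<Rightarrow> complex ^ 'n"
  assumes lf: "linear f" and h: "\<And>x. f (\<i> *s x) = - (\<i> *s g x)"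
  shows "(f ^^ k) (\<i> *s x) = (-1)^k *\<^sub>R (\<i> *s (g ^^ k) x)"
proof (induction k)
  case (Suc k)
  have "(f ^^ Suc k) (\<i> *s x) = f ((-1)^k *\<^sub>R (\<i> *s (g ^^ k) x))" using Suc by simp
  also have "\<dots> = (-1)^k *\<^sub>R f (\<i> *s (g ^^ k) x)" using linear_scale[OF lf] by simp
  also have "\<dots> = (-1)^Suc k *\<^sub>R (\<i> *s (g ^^ Suc k) x)" using h by simp
  finally show ?case .
qed simp

lemma scaleR_vec: "(r::real) *\<^sub>R (x::complex^'n) = complex_of_real r *s x"
  unfolding vec_eq_iff vector_scaleR_component vector_smult_component by (simp add: scaleR_conv_of_real)

theorem mainTheorem6:
  fixes A :: "complex ^ 'n \<Rightarrow> complex ^ 'n" and l :: real and k :: nat and v :: "complex ^ 'n"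
  assumes "antilinear A" and "l > 0" and "v \<in> W_lam A l k"
  shows "\<exists>!p. fst p \<in> Wt_lam A l k \<and> snd p \<in> Wt_lam A l k \<and> v = fst p + \<i> *s snd p"
proof -
  have Aadd: "A (x + y) = A x + A y" for x y
    using assms(1)[unfolded antilinear_def, rule_format, of 1 x y] by simp
  have Asc: "A (z *s x) = cnj z *s A x" for z x
    using assms(1)[unfolded antilinear_def, rule_format, of z x 0] Aadd[of 0 0] by simp
  have Adiff: "A (x - y) = A x - A y" for x y
    using Aadd[of "x - y" y] by (simp add: algebra_simps)
  have AR: "A (r *\<^sub>R x) = r *\<^sub>R A x" for r x
    using Asc[of "complex_of_real r" x] by (simp add: scaleR_vec)
  define P where "P = (\<lambda>y. A y - complex_of_real l *s y)"
  define Q where "Q = (\<lambda>y. A y + complex_of_real l *s y)"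
  have P': "P = (\<lambda>y. A y - l *\<^sub>R y)" unfolding P_def by (simp add: scaleR_vec)
  have Q': "Q = (\<lambda>y. A y + l *\<^sub>R y)" unfolding Q_def by (simp add: scaleR_vec)
  have lP: "linear P" unfolding P' by (rule linearI) (auto simp: Aadd Adiff AR algebra_simps)
  have lQ: "linear Q" unfolding Q' by (rule linearI) (auto simp: Aadd Adiff AR algebra_simps)
  have PQ: "P (Q x) = Q (P x)" for x
    unfolding P' Q' by (simp add: Aadd Adiff AR algebra_simps)
  have QP: "Q x = P x + (2*l) *\<^sub>R x" for x
  proof -
    have "(2*l) *\<^sub>R x = l *\<^sub>R x + l *\<^sub>R x" by (simp add: scaleR_add_left[symmetric])
    then show ?thesis unfolding P' Q' by simp
  qed
  have T: "(\<lambda>y. A (A y) - complex_of_real (l\<^sup>2) *s y) = (\<lambda>x. P (Q x))"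
  proof (rule ext)
    fix y :: "complex ^ 'n"
    have e: "complex_of_real (l\<^sup>2) *s y = l *\<^sub>R (l *\<^sub>R y)"
      by (simp add: scaleR_vec power2_eq_square)
    show "A (A y) - complex_of_real (l\<^sup>2) *s y = P (Q y)"
      unfolding e P' Q' by (simp add: Aadd Adiff AR algebra_simps)
  qed
  have hP: "P (\<i> *s x) = - (\<i> *s Q x)" for x
    unfolding P_def Q_def by (simp add: Asc vec_eq_iff algebra_simps)
  have hQ: "Q (\<i> *s x) = - (\<i> *s P x)" for x
    unfolding P_def Q_def by (simp add: Asc vec_eq_iff algebra_simps)
  have Wt: "Wt_lam A l k = {x. (P ^^ k) x = 0}" unfolding Wt_lam_def P_def by simp
  have v: "(P ^^ k) ((Q ^^ k) v) = 0"
    using assms(3) unfolding W_lam_def T comm_funpow2[of P Q, OF PQ] by simp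
  obtain a b where ab: "v = a + b" "(P ^^ k) a = 0" "(Q ^^ k) b = 0"
    using decomp[OF lP lQ PQ QP assms(2) v] by blast
  note ipP = ipow[OF lP hP] and ipQ = ipow[OF lQ hQ]
  show ?thesis
  proof (rule ex1I[of _ "(a, \<i> *s (-b))"])
    have "(P ^^ k) (\<i> *s (-b)) = 0"
      using ipP[where x="-b"] linear_neg[OF lin_funpow[OF lQ]] ab(3) by simp
    moreover have "\<i> *s (\<i> *s (-b)) = b" by (simp add: vec_eq_iff)
    ultimately show "fst (a, \<i> *s (-b)) \<in> Wt_lam A l k \<and> snd (a, \<i> *s (-b)) \<in> Wt_lam A l k \<and>
      v = fst (a, \<i> *s (-b)) + \<i> *s snd (a, \<i> *s (-b))" using ab unfolding Wt by simp
  next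
    fix p assume p: "fst p \<in> Wt_lam A l k \<and> snd p \<in> Wt_lam A l k \<and> v = fst p + \<i> *s snd p"
    obtain p1 p2 where pp: "p = (p1, p2)" by force
    have p1: "(P ^^ k) p1 = 0" and p2: "(P ^^ k) p2 = 0" and vp: "v = p1 + \<i> *s p2"
      using p unfolding pp Wt by auto
    have q2: "(Q ^^ k) (\<i> *s p2) = 0" using ipQ[where x=p2] p2 by simp
    define d where "d = p1 - a"
    have d1: "(P ^^ k) d = 0" unfolding d_def
      using linear_diff[OF lin_funpow[OF lP]] p1 ab(2) by simp
    have d2: "d = b - \<i> *s p2" unfolding d_def using vp ab(1) by (simp add: algebra_simps)
    have "(Q ^^ k) d = 0" unfolding d2 using linear_diff[OF lin_funpow[OF lQ]] q2 ab(3) by simp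
    then have "d = 0" using inter0[OF lP lQ PQ QP assms(2)] d1 by blast
    then have e1: "p1 = a" and e2: "\<i> *s p2 = b" using d2 unfolding d_def by auto
    have "\<i> *s (-b) = p2" unfolding e2[symmetric] by (simp add: vec_eq_iff)
    then have "p2 = \<i> *s (-b)" by simp
    then show "p = (a, \<i> *s (-b))" using pp e1 by simp
  qed
qed

end
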